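(* Let $\langle\mathcal X,\mathcal C,d,\ell,(x_1,\dots,x_n)\rangle$ be a multiple facility location instance and $1\le k\le n$. Define the feature $f:[n]\to\mathcal X$ by $f(i)=x_i$. Then $$\mathbb E_{S\sim\mathcal U_{k,n}}\big[\textsc{Social-Cost}(\overline y(S))\big]\le\textsc{Social-Opt}+\mathbb E_{S\sim\mathcal U_{k,n}}\big[W(\phi_f^{[n]},\phi_f^S)\big].$$
   Context: A multiple facility location instance consists of a metric space $(\mathcal X,d)$ with $d:\mathcal X\times\mathcal X\to[0,1]$, candidate locations $\mathcal C\subseteq\mathcal X$, a number $\ell\ge1$ of facilities and agent locations $x_1,\dots,x_n$. For $y\in\mathcal C^\ell$, $\mathrm{Cost}_i(y)=\min_{j\in[\ell]}d(x_i,y_j)$, $\textsc{Social-Cost}(y)=\frac1n\sum_i\mathrm{Cost}_i(y)$, $\textsc{Social-Opt}=\min_{y\in\mathcal C^\ell}\textsc{Social-Cost}(y)$, $\textsc{Panel-Cost}(y,S)=\frac1k\sum_{i\in S}\mathrm{Cost}_i(y)$, $\overline y(S)\in\arg\min_{y\in\mathcal C^\ell}\textsc{Panel-Cost}(y,S)$ (minimizers assumed to exist). For nonempty $S\subseteq[n]$, $\phi_f^S=\frac1{|S|}\sum_{i\in S}\delta(f(i))$ with $\delta$ a Dirac mass; $W(\phi,\psi)=\min_\gamma\mathbb E_{(x,y)\sim\gamma}[d(x,y)]$ over couplings $\gamma$ of $\phi,\psi$. $\mathcal U_{k,n}$ is the uniform distribution over size-$k$ subsets of $[n]$. *)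

theory Defs
  imports "HOL-Probability.Probability"
begin

definition metric01 :: "'a set \<Rightarrow> ('a \<Rightarrow> 'a \<Rightarrow> real) \<Rightarrow> bool" where
  "metric01 X d \<longleftrightarrow>
     (\<forall>a\<in>X. \<forall>b\<in>X. 0 \<le> d a b \<and> d a b \<le> 1) \<and>
     (\<forall>a\<in>X. \<forall>b\<in>X. d a b = 0 \<longleftrightarrow> a = b) \<and>
     (\<forall>a\<in>X. \<forall>b\<in>X. d a b = d b a) \<and>
     (\<forall>a\<in>X. \<forall>b\<in>X. \<forall>c\<in>X. d a c \<le> d a b + d b c)"

text \<open>Facility vectors y in C^l, represented as functions on {..<l}.\<close>
definition feasible :: "'a set \<Rightarrow> nat \<Rightarrow> (nat \<Rightarrow> 'a) \<Rightarrow> bool" where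
  "feasible C l y \<longleftrightarrow> (\<forall>j<l. y j \<in> C)"

definition cost :: "('a \<Rightarrow> 'a \<Rightarrow> real) \<Rightarrow> nat \<Rightarrow> (nat \<Rightarrow> 'a) \<Rightarrow> 'a \<Rightarrow> real" where
  "cost d l y xi = Min ((\<lambda>j. d xi (y j)) ` {..<l})"

definition social_cost :: "('a \<Rightarrow> 'a \<Rightarrow> real) \<Rightarrow> nat \<Rightarrow> nat \<Rightarrow> (nat \<Rightarrow> 'a) \<Rightarrow> (nat \<Rightarrow> 'a) \<Rightarrow> real" where
  "social_cost d l n x y = (1 / real n) * (\<Sum>i\<in>{1..n}. cost d l y (x i))"

definition social_opt :: "('a \<Rightarrow> 'a \<Rightarrow> real) \<Rightarrow> 'a set \<Rightarrow> nat \<Rightarrow> nat \<Rightarrow> (nat \<Rightarrow> 'a) \<Rightarrow> real" where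
  "social_opt d C l n x = (INF y\<in>{y. feasible C l y}. social_cost d l n x y)"

definition panel_cost :: "('a \<Rightarrow> 'a \<Rightarrow> real) \<Rightarrow> nat \<Rightarrow> nat \<Rightarrow> (nat \<Rightarrow> 'a) \<Rightarrow> (nat \<Rightarrow> 'a) \<Rightarrow> nat set \<Rightarrow> real" where
  "panel_cost d l k x y S = (1 / real k) * (\<Sum>i\<in>S. cost d l y (x i))"

definition panels :: "nat \<Rightarrow> nat \<Rightarrow> nat set set" where
  "panels k n = {S. S \<subseteq> {1..n} \<and> card S = k}"

definition U :: "nat \<Rightarrow> nat \<Rightarrow> nat set pmf" where
  "U k n = pmf_of_set (panels k n)"

text \<open>Empirical distribution of feature f over nonempty S.\<close>
definition phi :: "(nat \<Rightarrow> 'a) \<Rightarrow> nat set \<Rightarrow> 'a pmf" where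
  "phi f S = map_pmf f (pmf_of_set S)"

definition couplings :: "'a pmf \<Rightarrow> 'a pmf \<Rightarrow> ('a \<times> 'a) pmf set" where
  "couplings p q = {\<gamma>. map_pmf fst \<gamma> = p \<and> map_pmf snd \<gamma> = q}"

definition W :: "('a \<Rightarrow> 'a \<Rightarrow> real) \<Rightarrow> 'a pmf \<Rightarrow> 'a pmf \<Rightarrow> real" where
  "W d p q = (INF \<gamma>\<in>couplings p q. measure_pmf.expectation \<gamma> (\<lambda>(a, b). d a b))"

end

theory Submission
  imports Defs
begin

lemma cost_lip:
  assumes m: "metric01 X d" and CX: "C \<subseteq> X" and l: "l \<ge> 1" and fy: "feasible C l y"
    and a: "a \<in> X" and b: "b \<in> X"
  shows "cost d l y a \<le> cost d l y b + d a b"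
proof -
  have ne: "(\<lambda>j. d b (y j)) ` {..<l} \<noteq> {}" using l by (auto simp: lessThan_empty_iff)
  obtain j where j: "j < l" "cost d l y b = d b (y j)"
    using Min_in[OF _ ne] unfolding cost_def by auto
  have yj: "y j \<in> X" using fy j CX unfolding feasible_def by auto
  have "cost d l y a \<le> d a (y j)" unfolding cost_def using j by (intro Min_le) auto
  also have "\<dots> \<le> d a b + d b (y j)" using m a b yj unfolding metric01_def by blast
  finally show ?thesis using j by simp
qed

lemma W_bound:
  fixes g :: "'a \<Rightarrow> real"
  assumes fp: "finite (set_pmf p)" and fq: "finite (set_pmf q)"
    and pX: "set_pmf p \<subseteq> X" and qX: "set_pmf q \<subseteq> X"
    and lip: "\<And>a b. a \<in> X \<Longrightarrow> b \<in> X \<Longrightarrow> g a \<le> g b + d a b"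
  shows "measure_pmf.expectation p g - measure_pmf.expectation q g \<le> W d p q"
  unfolding W_def
proof (rule cINF_greatest)
  show "couplings p q \<noteq> {}" unfolding couplings_def
    using map_fst_pair_pmf map_snd_pair_pmf by blast
next
  fix \<gamma> assume "\<gamma> \<in> couplings p q"
  then have m1: "map_pmf fst \<gamma> = p" and m2: "map_pmf snd \<gamma> = q" unfolding couplings_def by auto
  have sub: "set_pmf \<gamma> \<subseteq> set_pmf p \<times> set_pmf q"
  proof
    fix z assume "z \<in> set_pmf \<gamma>"
    then have "fst z \<in> set_pmf p" "snd z \<in> set_pmf q"
      using m1 m2 set_map_pmf by (metis image_eqI)+
    then show "z \<in> set_pmf p \<times> set_pmf q" by (cases z) auto
  qed
  have fin: "finite (set_pmf \<gamma>)" using sub fp fq finite_subset by blast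
  have "measure_pmf.expectation p g - measure_pmf.expectation q g
      = measure_pmf.expectation \<gamma> (\<lambda>z. g (fst z)) - measure_pmf.expectation \<gamma> (\<lambda>z. g (snd z))"
    using m1 m2 integral_map_pmf by metis
  also have "\<dots> = measure_pmf.expectation \<gamma> (\<lambda>z. g (fst z) - g (snd z))"
    by (rule Bochner_Integration.integral_diff[symmetric]) (use integrable_measure_pmf_finite[OF fin] in blast)+
  also have "\<dots> \<le> measure_pmf.expectation \<gamma> (\<lambda>(a, b). d a b)"
  proof (rule integral_mono_AE)
    show "integrable (measure_pmf \<gamma>) (\<lambda>z. g (fst z) - g (snd z))"
      using integrable_measure_pmf_finite[OF fin] by blast
    show "integrable (measure_pmf \<gamma>) (\<lambda>(a, b). d a b)"
      using integrable_measure_pmf_finite[OF fin] by blast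
    show "AE z in measure_pmf \<gamma>. g (fst z) - g (snd z) \<le> (case z of (a, b) \<Rightarrow> d a b)"
    proof (rule AE_pmfI)
      fix z assume "z \<in> set_pmf \<gamma>"
      then have "fst z \<in> X" "snd z \<in> X" using sub pX qX by (cases z, auto)+
      then show "g (fst z) - g (snd z) \<le> (case z of (a, b) \<Rightarrow> d a b)"
        using lip by (cases z) fastforce
    qed
  qed
  finally show "measure_pmf.expectation p g - measure_pmf.expectation q g
      \<le> measure_pmf.expectation \<gamma> (\<lambda>(a, b). d a b)" .
qed

lemma exp_phi:
  assumes "finite S" "S \<noteq> {}"
  shows "measure_pmf.expectation (phi x S) g = (\<Sum>i\<in>S. g (x i)) / real (card S)"
  unfolding phi_def integral_map_pmf using integral_pmf_of_set[OF assms(2,1)] by simp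

lemma count_panels:
  assumes i: "i \<in> {1..n}" and k: "1 \<le> k"
  shows "card {S \<in> panels k n. i \<in> S} = (n - 1) choose (k - 1)"
proof -
  have "bij_betw (\<lambda>S. S - {i}) {S \<in> panels k n. i \<in> S} {T. T \<subseteq> {1..n} - {i} \<and> card T = k - 1}"
  proof (rule bij_betw_byWitness[where f' = "insert i"])
    show "\<forall>S\<in>{S \<in> panels k n. i \<in> S}. insert i (S - {i}) = S" by auto
    show "\<forall>T\<in>{T. T \<subseteq> {1..n} - {i} \<and> card T = k - 1}. insert i T - {i} = T" by auto
    show "(\<lambda>S. S - {i}) ` {S \<in> panels k n. i \<in> S} \<subseteq> {T. T \<subseteq> {1..n} - {i} \<and> card T = k - 1}"
      unfolding panels_def by (auto dest: finite_subset)
    show "insert i ` {T. T \<subseteq> {1..n} - {i} \<and> card T = k - 1} \<subseteq> {S \<in> panels k n. i \<in> S}"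
    proof
      fix S assume "S \<in> insert i ` {T. T \<subseteq> {1..n} - {i} \<and> card T = k - 1}"
      then obtain T where T: "T \<subseteq> {1..n} - {i}" "card T = k - 1" "S = insert i T" by auto
      have "finite T" using T(1) finite_subset by blast
      moreover have "i \<notin> T" using T(1) by auto
      ultimately have "card S = k" using T k by auto
      then show "S \<in> {S \<in> panels k n. i \<in> S}" using T i unfolding panels_def by auto
    qed
  qed
  then have "card {S \<in> panels k n. i \<in> S} = card {T. T \<subseteq> {1..n} - {i} \<and> card T = k - 1}"
    by (rule bij_betw_same_card)
  also have "\<dots> = card ({1..n} - {i}) choose (k - 1)" by (rule n_subsets) simp
  also have "card ({1..n} - {i}) = n - 1" using i by simp
  finally show ?thesis .
qed

lemma finite_panels: "finite (panels k n)"
  unfolding panels_def by (rule finite_subset[of _ "Pow {1..n}"]) auto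

lemma card_panels: "card (panels k n) = n choose k"
  unfolding panels_def using n_subsets[of "{1..n}" k] by simp

lemma avg_panel:
  fixes h :: "nat \<Rightarrow> real"
  assumes k: "1 \<le> k" "k \<le> n"
  shows "(\<Sum>S\<in>panels k n. (1 / real k) * (\<Sum>i\<in>S. h i)) / real (card (panels k n))
         = (1 / real n) * (\<Sum>i\<in>{1..n}. h i)"
proof -
  have "(\<Sum>S\<in>panels k n. (\<Sum>i\<in>S. h i)) = (\<Sum>S\<in>panels k n. (\<Sum>i\<in>{i\<in>{1..n}. i \<in> S}. h i))"
    by (rule sum.cong) (auto simp: panels_def intro!: sum.cong)
  also have "\<dots> = (\<Sum>i\<in>{1..n}. (\<Sum>S\<in>{S\<in>panels k n. i \<in> S}. h i))"
    by (rule sum.swap_restrict) (auto simp: finite_panels)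
  also have "\<dots> = (\<Sum>i\<in>{1..n}. h i * real ((n - 1) choose (k - 1)))"
    using count_panels[OF _ k(1)] by (auto intro!: sum.cong)
  finally have e: "(\<Sum>S\<in>panels k n. (\<Sum>i\<in>S. h i)) = (\<Sum>i\<in>{1..n}. h i) * real ((n - 1) choose (k - 1))"
    by (simp add: sum_distrib_right)
  have b: "real k * real (n choose k) = real n * real ((n - 1) choose (k - 1))"
    using times_binomial_minus1_eq[of k n] k by (metis of_nat_mult less_le_trans zero_less_one)
  have pos: "real (n choose k) > 0" using k by simp
  have "(\<Sum>S\<in>panels k n. (1 / real k) * (\<Sum>i\<in>S. h i)) / real (card (panels k n))
      = (\<Sum>i\<in>{1..n}. h i) * real ((n - 1) choose (k - 1)) / (real k * real (n choose k))"
    by (simp add: sum_distrib_left[symmetric] e card_panels sum_divide_distrib[symmetric])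
  also have "\<dots> = (1 / real n) * (\<Sum>i\<in>{1..n}. h i)"
    using b k pos by (simp add: field_simps)
  finally show ?thesis .
qed

theorem lemma4p13:
  fixes X C :: "'a set" and d :: "'a \<Rightarrow> 'a \<Rightarrow> real" and l n k :: nat
    and x :: "nat \<Rightarrow> 'a" and ybar :: "nat set \<Rightarrow> nat \<Rightarrow> 'a"
  assumes "metric01 X d"
    and "C \<subseteq> X" and "C \<noteq> {}"
    and "l \<ge> 1"
    and "\<forall>i\<in>{1..n}. x i \<in> X"
    and "1 \<le> k" and "k \<le> n"
    and "\<forall>S\<in>panels k n. feasible C l (ybar S) \<and>
           (\<forall>y. feasible C l y \<longrightarrow> panel_cost d l k x (ybar S) S \<le> panel_cost d l k x y S)"
  shows "measure_pmf.expectation (U k n) (\<lambda>S. social_cost d l n x (ybar S))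
         \<le> social_opt d C l n x
           + measure_pmf.expectation (U k n) (\<lambda>S. W d (phi x {1..n}) (phi x S))"
proof -
  note m = assms(1) and CX = assms(2) and l = assms(4) and xX = assms(5) and k = assms(6,7)
    and opt = assms(8)
  define P where "P = panels k n"
  define w where "w S = W d (phi x {1..n}) (phi x S)" for S
  have finP: "finite P" unfolding P_def by (rule finite_panels)
  have neP: "P \<noteq> {}"
  proof -
    have "{1..k} \<in> P" using k unfolding P_def panels_def by auto
    then show ?thesis by auto
  qed
  have cardP: "real (card P) > 0" using finP neP by (simp add: card_gt_0_iff)
  have EU: "measure_pmf.expectation (U k n) f = sum f P / real (card P)" for f :: "nat set \<Rightarrow> real"
    unfolding U_def P_def[symmetric] by (rule integral_pmf_of_set[OF neP finP])
  have Sprops: "finite S" "S \<noteq> {}" "S \<subseteq> {1..n}" "card S = k" if "S \<in> P" for S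
    using that k unfolding P_def panels_def by (auto dest: finite_subset)
  have key: "social_cost d l n x y \<le> panel_cost d l k x y S + w S"
    if S: "S \<in> P" and fy: "feasible C l y" for S y
  proof -
    let ?g = "cost d l y"
    have n0: "n > 0" using k by simp
    have fin1: "finite (set_pmf (phi x {1..n}))" "set_pmf (phi x {1..n}) \<subseteq> X"
      using n0 xX unfolding phi_def by (auto simp: set_pmf_of_set)
    have fin2: "finite (set_pmf (phi x S))" "set_pmf (phi x S) \<subseteq> X"
      using Sprops[OF S] xX unfolding phi_def by (auto simp: set_pmf_of_set)
    have "measure_pmf.expectation (phi x {1..n}) ?g - measure_pmf.expectation (phi x S) ?g \<le> w S"
      unfolding w_def
      by (rule W_bound[OF fin1(1) fin2(1) fin1(2) fin2(2)]) (rule cost_lip[OF m CX l fy])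
    moreover have "measure_pmf.expectation (phi x {1..n}) ?g = social_cost d l n x y"
      using n0 by (subst exp_phi) (auto simp: social_cost_def)
    moreover have "measure_pmf.expectation (phi x S) ?g = panel_cost d l k x y S"
      using Sprops[OF S] by (subst exp_phi) (auto simp: panel_cost_def)
    ultimately show ?thesis by simp
  qed
  have main: "measure_pmf.expectation (U k n) (\<lambda>S. social_cost d l n x (ybar S))
      \<le> social_cost d l n x y + measure_pmf.expectation (U k n) w" if fy: "feasible C l y" for y
  proof -
    have "(\<Sum>S\<in>P. social_cost d l n x (ybar S)) \<le> (\<Sum>S\<in>P. panel_cost d l k x y S + w S)"
    proof (rule sum_mono)
      fix S assume S: "S \<in> P"
      have "social_cost d l n x (ybar S) \<le> panel_cost d l k x (ybar S) S + w S"
        using key[OF S] opt S unfolding P_def by blast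
      also have "\<dots> \<le> panel_cost d l k x y S + w S" using opt S fy unfolding P_def by auto
      finally show "social_cost d l n x (ybar S) \<le> panel_cost d l k x y S + w S" .
    qed
    then have "(\<Sum>S\<in>P. social_cost d l n x (ybar S)) / real (card P)
        \<le> (\<Sum>S\<in>P. panel_cost d l k x y S) / real (card P) + (\<Sum>S\<in>P. w S) / real (card P)"
      using cardP by (simp add: sum.distrib divide_right_mono add_divide_distrib[symmetric])
    also have "(\<Sum>S\<in>P. panel_cost d l k x y S) / real (card P) = social_cost d l n x y"
      unfolding P_def panel_cost_def social_cost_def by (rule avg_panel[OF k])
    finally show ?thesis by (simp add: EU)
  qed
  have "measure_pmf.expectation (U k n) (\<lambda>S. social_cost d l n x (ybar S))
      - measure_pmf.expectation (U k n) w \<le> social_opt d C l n x"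
    unfolding social_opt_def
  proof (rule cINF_greatest)
    obtain c where "c \<in> C" using assms(3) by auto
    then have "feasible C l (\<lambda>_. c)" unfolding feasible_def by auto
    then show "{y. feasible C l y} \<noteq> {}" by blast
  next
    fix y assume "y \<in> {y. feasible C l y}"
    then show "measure_pmf.expectation (U k n) (\<lambda>S. social_cost d l n x (ybar S))
      - measure_pmf.expectation (U k n) w \<le> social_cost d l n x y" using main by fastforce
  qed
  then show ?thesis unfolding w_def by simp
qed

end
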